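(* Let $m,n\in\mathbb N$ with $m\ge n\ge 1$, and let $\beta>1$ be the real zero of $x^3-mx^2-mx-n$ that exceeds $1$. Then $\mathrm{Fin}(-\beta)$ is a ring if and only if $n=m$. (Equivalently, $\mathrm{Fin}(-\beta)=\mathbb Z[\beta]$ if and only if $n=m$.)
   Context: Fix a real number $\beta>1$ and set $\ell=\frac{-\beta}{\beta+1}$. Define $T_{-\beta}:[\ell,\ell+1)\to[\ell,\ell+1)$ by $T_{-\beta}(x)=-\beta x-\lfloor -\beta x-\ell\rfloor$. For $x\in[\ell,\ell+1)$, the $(-\beta)$-expansion of $x$ is $d_{-\beta}(x)=x_1x_2\cdots$ with $x_i=\lfloor -\beta\, T_{-\beta}^{i-1}(x)-\ell\rfloor\in\{0,\dots,\lfloor\beta\rfloor\}$. For arbitrary $x\in\mathbb R$, let $k\ge0$ be minimal with $x/(-\beta)^k\in(\ell,\ell+1)$ and let $d_{-\beta}(x/(-\beta)^k)=x_1x_2\cdots$. The $(-\beta)$-expansion of $x$ is $x_1\cdots x_k\bullet x_{k+1}x_{k+2}\cdots$ if $k\ge1$, and $0\bullet x_1x_2\cdots$ if $k=0$. It represents $x=\sum_i x_i'(-\beta)^i$ in the usual positional way. $\mathbb Z_{-\beta}$ is the set of reals whose $(-\beta)$-expansion has only zeros after $\bullet$. $\mathrm{Fin}(-\beta)=\bigcup_{i\ge0}(-\beta)^{-i}\mathbb Z_{-\beta}$ is the set of reals whose $(-\beta)$-expansion has only finitely many nonzero digits. The question is whether this set is closed under addition, negation and multiplication, i.e. whether it is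 a subring of $\mathbb R$. *)

theory Defs
  imports Complex_Main
begin

text \<open>Left endpoint ell = -beta/(beta+1) of the interval [ell, ell+1).\<close>
definition nb_ell :: "real \<Rightarrow> real" where
  "nb_ell \<beta> = - \<beta> / (\<beta> + 1)"

definition nb_T :: "real \<Rightarrow> real \<Rightarrow> real" where
  "nb_T \<beta> x = - \<beta> * x - of_int \<lfloor>- \<beta> * x - nb_ell \<beta>\<rfloor>"

definition nb_digit :: "real \<Rightarrow> real \<Rightarrow> nat \<Rightarrow> int" where
  "nb_digit \<beta> x i = \<lfloor>- \<beta> * ((nb_T \<beta> ^^ (i - 1)) x) - nb_ell \<beta>\<rfloor>"

definition nb_k :: "real \<Rightarrow> real \<Rightarrow> nat" where
  "nb_k \<beta> x = (LEAST k. x / (- \<beta>) ^ k \<in> {nb_ell \<beta> <..< nb_ell \<beta> + 1})"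

text \<open>Z_{-beta}: reals whose (-beta)-expansion x_1...x_k . x_{k+1}... has only zeros
  after the radix point, i.e. x_i = 0 for all i > k (digits of x/(-beta)^k).\<close>
definition Z_nb :: "real \<Rightarrow> real set" where
  "Z_nb \<beta> = {x. \<forall>i > nb_k \<beta> x. nb_digit \<beta> (x / (- \<beta>) ^ nb_k \<beta> x) i = 0}"

definition Fin_nb :: "real \<Rightarrow> real set" where
  "Fin_nb \<beta> = (\<Union>i::nat. (\<lambda>z. inverse ((- \<beta>) ^ i) * z) ` Z_nb \<beta>)"

definition is_ring_set :: "real set \<Rightarrow> bool" where
  "is_ring_set S \<longleftrightarrow> (\<forall>x\<in>S. \<forall>y\<in>S. x + y \<in> S \<and> x * y \<in> S) \<and> (\<forall>x\<in>S. - x \<in> S)"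

end

theory Submission
  imports Defs
begin


lemma ell_eq: "\<beta> > 1 \<Longrightarrow> nb_ell \<beta> = 1/(\<beta>+1) - 1"
  unfolding nb_ell_def by (simp add: field_simps)

lemma ell_range: "\<beta> > 1 \<Longrightarrow> -1 < nb_ell \<beta> \<and> nb_ell \<beta> < -1/2"
  unfolding nb_ell_def by (auto simp: field_simps)

lemma T_bounds:
  assumes "\<beta> > 1"
  shows "nb_ell \<beta> \<le> nb_T \<beta> x \<and> nb_T \<beta> x < nb_ell \<beta> + 1"
proof -
  define t where "t = - \<beta> * x - nb_ell \<beta>"
  have "nb_T \<beta> x = t + nb_ell \<beta> - of_int \<lfloor>t\<rfloor>" unfolding nb_T_def t_def by simp
  moreover have "of_int \<lfloor>t\<rfloor> \<le> t" "t < of_int \<lfloor>t\<rfloor> + 1" by linarith+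
  ultimately show ?thesis by linarith
qed

lemma floor_mell: "\<beta> > 1 \<Longrightarrow> \<lfloor>- nb_ell \<beta>\<rfloor> = 0"
  unfolding nb_ell_def by (simp add: floor_eq_iff field_simps)

lemma T_zero: "\<beta> > 1 \<Longrightarrow> nb_T \<beta> 0 = 0"
  unfolding nb_T_def using floor_mell by simp

lemma T_funpow_zero: "\<beta> > 1 \<Longrightarrow> (nb_T \<beta> ^^ j) 0 = 0"
  by (induction j) (auto simp: T_zero)

lemma T_div:
  assumes "\<beta> > 1" "nb_ell \<beta> < v" "v < nb_ell \<beta> + 1"
  shows "nb_T \<beta> (v / (- \<beta>)) = v"
proof -
  have "- \<beta> * (v / - \<beta>) = v" using assms(1) by simp
  moreover have "\<lfloor>v - nb_ell \<beta>\<rfloor> = 0" using assms by (simp add: floor_eq_iff)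
  ultimately show ?thesis unfolding nb_T_def by simp
qed

lemma div_in:
  assumes "\<beta> > 1" "nb_ell \<beta> < v" "v < nb_ell \<beta> + 1"
  shows "nb_ell \<beta> < v / (- \<beta>) \<and> v / (- \<beta>) < nb_ell \<beta> + 1"
proof -
  have e: "nb_ell \<beta> = 1/(\<beta>+1) - 1" using ell_eq assms by simp
  have b1: "1/(\<beta>+1) - 1 < v" "v < 1/(\<beta>+1)" using assms e by auto
  have "v / (- \<beta>) = - v / \<beta>" by simp
  moreover have "- v / \<beta> < 1/(\<beta>+1)"
  proof -
    have "- v < 1 - 1/(\<beta>+1)" using b1 by simp
    also have "\<dots> = \<beta> / (\<beta>+1)" using assms by (simp add: field_simps)
    finally have "- v < \<beta>/(\<beta>+1)" .
    thus ?thesis using assms by (simp add: field_simps)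
  qed
  moreover have "1/(\<beta>+1) - 1 < - v / \<beta>"
  proof -
    have "v / \<beta> < (1/(\<beta>+1)) / \<beta>" by (rule divide_strict_right_mono) (use b1 assms in auto)
    also have "\<dots> \<le> 1/(\<beta>+1)" using assms by (simp add: divide_le_eq)
    also have "\<dots> \<le> 1 - 1/(\<beta>+1)" using assms by (simp add: field_simps)
    finally show ?thesis by (simp add: field_simps)
  qed
  ultimately show ?thesis using e by simp
qed

lemma pow_div_in:
  assumes "\<beta> > 1" "nb_ell \<beta> < v" "v < nb_ell \<beta> + 1"
  shows "nb_ell \<beta> < v / (- \<beta>)^j \<and> v / (- \<beta>)^j < nb_ell \<beta> + 1"
proof (induction j)
  case 0 then show ?case using assms by simp
next
  case (Suc j)
  have eq: "v / (- \<beta>)^Suc j = (v / (- \<beta>)^j) / (- \<beta>)" by (simp add: field_simps)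
  have "nb_ell \<beta> < (v/(- \<beta>)^j)/(- \<beta>) \<and> (v/(- \<beta>)^j)/(- \<beta>) < nb_ell \<beta> + 1"
    using div_in[OF assms(1)] Suc by blast
  then show ?case by (simp only: eq)
qed

lemma T_iter_div:
  assumes "\<beta> > 1" "nb_ell \<beta> < v" "v < nb_ell \<beta> + 1"
  shows "(nb_T \<beta> ^^ j) (v / (- \<beta>)^j) = v"
proof (induction j)
  case 0 then show ?case by simp
next
  case (Suc j)
  have eq: "v / (- \<beta>)^Suc j = (v / (- \<beta>)^j) / (- \<beta>)" by (simp add: field_simps)
  have "nb_T \<beta> ((v / (- \<beta>)^j) / (- \<beta>)) = v / (- \<beta>)^j"
    using T_div[OF assms(1)] pow_div_in[OF assms] by blast
  then have "nb_T \<beta> (v / (- \<beta>)^Suc j) = v / (- \<beta>)^j" by (simp only: eq)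
  have "(nb_T \<beta> ^^ Suc j) (v / (- \<beta>)^Suc j) = (nb_T \<beta> ^^ j) (nb_T \<beta> (v / (- \<beta>)^Suc j))"
    by (simp only: funpow_Suc_right o_apply)
  then show ?case using Suc \<open>nb_T \<beta> (v / (- \<beta>)^Suc j) = v / (- \<beta>)^j\<close> by simp
qed

lemma ex_k:
  assumes "\<beta> > 1"
  shows "\<exists>k. x / (- \<beta>) ^ k \<in> {nb_ell \<beta> <..< nb_ell \<beta> + 1}"
proof -
  obtain k where k: "\<bar>x\<bar> * (\<beta>+1) < \<beta> ^ k" using real_arch_pow assms by blast
  have pos: "\<beta>^k > 0" using assms by simp
  have "\<bar>x / (- \<beta>) ^ k\<bar> = \<bar>x\<bar> / \<beta>^k" using assms by (simp add: power_abs)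
  also have "\<dots> < 1/(\<beta>+1)" using k pos assms by (simp add: field_simps)
  finally have a: "\<bar>x / (- \<beta>) ^ k\<bar> < 1/(\<beta>+1)" .
  have "1/(\<beta>+1) \<le> 1 - 1/(\<beta>+1)" using assms by (simp add: field_simps)
  moreover have "x / (- \<beta>) ^ k < 1/(\<beta>+1) \<and> - (x / (- \<beta>) ^ k) < 1/(\<beta>+1)" using a by (simp only: abs_less_iff)
  ultimately have "1/(\<beta>+1) - 1 < x / (- \<beta>) ^ k \<and> x / (- \<beta>) ^ k < 1/(\<beta>+1)" by linarith
  then show ?thesis using ell_eq[OF assms] by auto
qed

lemma nb_k_in:
  assumes "\<beta> > 1"
  shows "x / (- \<beta>) ^ nb_k \<beta> x \<in> {nb_ell \<beta> <..< nb_ell \<beta> + 1}"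
  unfolding nb_k_def using LeastI_ex[OF ex_k[OF assms]] .

lemma nb_k_le:
  "x / (- \<beta>) ^ k \<in> {nb_ell \<beta> <..< nb_ell \<beta> + 1} \<Longrightarrow> nb_k \<beta> x \<le> k"
  unfolding nb_k_def by (rule Least_le)




definition Zb :: "real \<Rightarrow> real set" where
  "Zb \<beta> = {x. \<exists>a b c :: int. x = of_int a + of_int b * \<beta> + of_int c * \<beta>^2}"

lemma Zb_int: "of_int a \<in> Zb \<beta>"
  unfolding Zb_def by (rule CollectI, rule exI[of _ a], rule exI[of _ 0], rule exI[of _ 0]) simp

lemma Zb_add: "x \<in> Zb \<beta> \<Longrightarrow> y \<in> Zb \<beta> \<Longrightarrow> x + y \<in> Zb \<beta>"
  unfolding Zb_def
proof (clarify)
  fix a b c a' b' c' :: int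
  show "\<exists>a'' b'' c''::int. of_int a + of_int b * \<beta> + of_int c * \<beta>^2 + (of_int a' + of_int b' * \<beta> + of_int c' * \<beta>^2)
     = of_int a'' + of_int b'' * \<beta> + of_int c'' * \<beta>^2"
    by (rule exI[of _ "a+a'"], rule exI[of _ "b+b'"], rule exI[of _ "c+c'"]) (simp add: algebra_simps)
qed

lemma Zb_smult: "x \<in> Zb \<beta> \<Longrightarrow> of_int k * x \<in> Zb \<beta>"
  unfolding Zb_def
proof (clarify)
  fix a b c :: int
  show "\<exists>a'' b'' c''::int. of_int k * (of_int a + of_int b * \<beta> + of_int c * \<beta>^2)
     = of_int a'' + of_int b'' * \<beta> + of_int c'' * \<beta>^2"
    by (rule exI[of _ "k*a"], rule exI[of _ "k*b"], rule exI[of _ "k*c"]) (simp add: algebra_simps)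
qed

lemma Zb_uminus: "x \<in> Zb \<beta> \<Longrightarrow> - x \<in> Zb \<beta>"
  using Zb_smult[of x \<beta> "-1"] by simp

lemma Zb_diff: "x \<in> Zb \<beta> \<Longrightarrow> y \<in> Zb \<beta> \<Longrightarrow> x - y \<in> Zb \<beta>"
  using Zb_add[of x \<beta> "-y"] Zb_uminus[of y \<beta>] by simp

lemma Zb_mult_beta:
  assumes hb: "\<beta>^3 = real m * \<beta>^2 + real m * \<beta> + real m" and x: "x \<in> Zb \<beta>"
  shows "\<beta> * x \<in> Zb \<beta>"
proof -
  obtain a b c :: int where xe: "x = of_int a + of_int b * \<beta> + of_int c * \<beta>^2" using x unfolding Zb_def by blast
  have "\<beta> * x = of_int a * \<beta> + of_int b * \<beta>^2 + of_int c * \<beta>^3" unfolding xe by (simp add: algebra_simps power2_eq_square power3_eq_cube)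
  also have "\<dots> = of_int (c * int m) + of_int (a + c * int m) * \<beta> + of_int (b + c * int m) * \<beta>^2"
    unfolding hb by (simp add: algebra_simps)
  finally show ?thesis unfolding Zb_def by blast
qed

lemma Zb_mult:
  assumes hb: "\<beta>^3 = real m * \<beta>^2 + real m * \<beta> + real m" and x: "x \<in> Zb \<beta>" and y: "y \<in> Zb \<beta>"
  shows "x * y \<in> Zb \<beta>"
proof -
  obtain a b c :: int where ye: "y = of_int a + of_int b * \<beta> + of_int c * \<beta>^2" using y unfolding Zb_def by blast
  have 1: "\<beta> * x \<in> Zb \<beta>" using Zb_mult_beta[OF hb x] .
  have 2: "\<beta> * (\<beta> * x) \<in> Zb \<beta>" using Zb_mult_beta[OF hb 1] .
  have "x * y = of_int a * x + of_int b * (\<beta> * x) + of_int c * (\<beta> * (\<beta> * x))"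
    unfolding ye by (simp add: algebra_simps power2_eq_square)
  then show ?thesis using Zb_add Zb_smult x 1 2 by metis
qed

lemma Zb_negbeta_pow:
  assumes hb: "\<beta>^3 = real m * \<beta>^2 + real m * \<beta> + real m"
  shows "(- \<beta>)^j \<in> Zb \<beta>"
proof (induction j)
  case 0 then show ?case using Zb_int[of 1 \<beta>] by simp
next
  case (Suc j)
  have "(- \<beta>)^Suc j = - (\<beta> * (- \<beta>)^j)" by simp
  then show ?case using Zb_uminus Zb_mult_beta[OF hb Suc] by metis
qed

lemma T_Zb_diff:
  assumes hb: "\<beta>^3 = real m * \<beta>^2 + real m * \<beta> + real m"
  shows "(- \<beta>)^j * y - (nb_T \<beta> ^^ j) y \<in> Zb \<beta>"
proof (induction j)
  case 0 then show ?case using Zb_int[of 0 \<beta>] by simp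
next
  case (Suc j)
  define w where "w = (nb_T \<beta> ^^ j) y"
  have "(- \<beta>)^Suc j * y - (nb_T \<beta> ^^ Suc j) y
        = - (\<beta> * ((- \<beta>)^j * y - w)) + of_int \<lfloor>- \<beta> * w - nb_ell \<beta>\<rfloor>"
    unfolding w_def by (simp add: nb_T_def algebra_simps)
  moreover have "\<beta> * ((- \<beta>)^j * y - w) \<in> Zb \<beta>" using Zb_mult_beta[OF hb] Suc unfolding w_def by blast
  ultimately show ?case using Zb_add Zb_uminus Zb_int by metis
qed

lemma Z_nb_sub:
  assumes b1: "\<beta> > 1" and hb: "\<beta>^3 = real m * \<beta>^2 + real m * \<beta> + real m" and z: "z \<in> Z_nb \<beta>"
  shows "z \<in> Zb \<beta>"
proof -
  define k where "k = nb_k \<beta> z"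
  define y where "y = z / (- \<beta>) ^ k"
  have dig: "\<And>i. i > k \<Longrightarrow> nb_digit \<beta> y i = 0" using z unfolding Z_nb_def k_def y_def by blast
  define w where "w = (nb_T \<beta> ^^ k) y"
  have step: "(nb_T \<beta> ^^ (k + j)) y = (- \<beta>)^j * w" for j
  proof (induction j)
    case 0 then show ?case unfolding w_def by simp
  next
    case (Suc j)
    have "nb_digit \<beta> y (k + j + 1) = 0" using dig by simp
    then have "\<lfloor>- \<beta> * ((nb_T \<beta> ^^ (k + j)) y) - nb_ell \<beta>\<rfloor> = 0" unfolding nb_digit_def by simp
    then have "(nb_T \<beta> ^^ (k + Suc j)) y = - \<beta> * ((nb_T \<beta> ^^ (k + j)) y)"
      by (simp add: nb_T_def)
    then show ?case using Suc by simp
  qed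
  have w0: "w = 0"
  proof (rule ccontr)
    assume "w \<noteq> 0"
    then have "\<bar>w\<bar> > 0" by simp
    obtain j where j: "2 / \<bar>w\<bar> < \<beta> ^ j" using real_arch_pow b1 by blast
    have "\<beta> ^ j \<le> \<beta> ^ Suc j" using b1 by simp
    then have le: "\<beta>^j * \<bar>w\<bar> \<le> \<beta>^Suc j * \<bar>w\<bar>" by (rule mult_right_mono) simp
    have "2 < \<beta>^j * \<bar>w\<bar>" using j \<open>\<bar>w\<bar> > 0\<close> by (simp add: field_simps)
    then have "2 < \<beta>^Suc j * \<bar>w\<bar>" using le by linarith
    moreover have "\<bar>(- \<beta>)^Suc j * w\<bar> = \<beta>^Suc j * \<bar>w\<bar>" using b1 by (simp add: abs_mult power_abs)
    moreover have "nb_ell \<beta> \<le> (- \<beta>)^Suc j * w \<and> (- \<beta>)^Suc j * w < nb_ell \<beta> + 1"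
      using step[of "Suc j"] T_bounds[OF b1] by (metis add_Suc_right funpow.simps(2) o_apply)
    moreover have "-1 < nb_ell \<beta>" "nb_ell \<beta> + 1 < 1" using ell_range[OF b1] by auto
    ultimately show False by (auto simp: abs_if split: if_splits)
  qed
  have "z = (- \<beta>)^k * y" unfolding y_def using b1 by simp
  then have "z = (- \<beta>)^k * y - w" using w0 by simp
  then show ?thesis using T_Zb_diff[OF hb, of k y] unfolding w_def by simp
qed




definition Hn :: "int \<Rightarrow> int \<Rightarrow> int" where
  "Hn x y = max \<bar>x\<bar> (max \<bar>y\<bar> \<bar>x - y\<bar>)"

definition R :: "int \<Rightarrow> int \<Rightarrow> int \<Rightarrow> int" where
  "R h x y = (if x = h \<and> 0 \<le> y \<and> y < h then 7
     else if x = h \<and> y = h then 6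
     else if y = h \<and> 0 < x \<and> x < h then 5
     else if x - y = -h \<and> x \<le> 0 \<and> y > 0 then 4
     else if x = -h \<and> -h < y \<and> y \<le> 0 then 3
     else if x = -h \<and> y = -h then 2
     else if y = -h \<and> -h < x \<and> x < 0 then 1
     else 0)"

definition Mes :: "int \<Rightarrow> int \<Rightarrow> nat" where
  "Mes x y = nat (8 * Hn x y + R (Hn x y) x y)"

lemma R_le: "0 \<le> R h x y \<and> R h x y \<le> 7"
  unfolding R_def by auto

lemma Hn_bounds: "- Hn x y \<le> x \<and> x \<le> Hn x y \<and> - Hn x y \<le> y \<and> y \<le> Hn x y \<and> - Hn x y \<le> x - y \<and> x - y \<le> Hn x y"
  unfolding Hn_def by auto

lemma Hn_ring: "x = Hn x y \<or> x = - Hn x y \<or> y = Hn x y \<or> y = - Hn x y \<or> x - y = Hn x y \<or> x - y = - Hn x y"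
  unfolding Hn_def by (auto simp: max_def abs_if)

lemma R_lt:
  fixes x y s h :: int
  assumes h1: "h \<ge> 1"
    and bx: "- h \<le> x" "x \<le> h" "- h \<le> y" "y \<le> h" "- h \<le> x - y" "x - y \<le> h"
    and ring: "x = h \<or> x = - h \<or> y = h \<or> y = - h \<or> x - y = h \<or> x - y = - h"
    and bs: "- h \<le> s" "s \<le> h" "- h \<le> s - x" "s - x \<le> h"
    and rings: "s = h \<or> s = - h \<or> x = h \<or> x = - h \<or> s - x = h \<or> s - x = - h"
    and f2: "y = h \<longrightarrow> s < h"
    and f2c: "x - y = - h \<and> x \<le> 0 \<longrightarrow> s < h"
    and f3: "y = - h \<longrightarrow> s > - h"
    and f4: "x - y = h \<and> 0 \<le> x \<and> x < h \<longrightarrow> s < h \<and> s > x - h"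
  shows "R h s x < R h x y"
  using assms unfolding R_def by (smt (z3))

lemma int_part:
  fixes x y s :: int
  assumes h1: "Hn x y \<ge> 1"
    and hs: "Hn s x \<le> Hn x y"
    and f2: "y = Hn x y \<longrightarrow> s < Hn x y"
    and f2c: "x - y = - Hn x y \<and> x \<le> 0 \<longrightarrow> s < Hn x y"
    and f3: "y = - Hn x y \<longrightarrow> s > - Hn x y"
    and f4: "x - y = Hn x y \<and> 0 \<le> x \<and> x < Hn x y \<longrightarrow> s < Hn x y \<and> s > x - Hn x y"
  shows "Mes s x < Mes x y"
proof (cases "Hn s x < Hn x y")
  case True
  then show ?thesis unfolding Mes_def using R_le[of "Hn s x" s x] R_le[of "Hn x y" x y] h1 by simp
next
  case False
  then have eq: "Hn s x = Hn x y" using hs by simp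
  have "R (Hn x y) s x < R (Hn x y) x y"
    apply (rule R_lt)
    using h1 Hn_bounds[of x y] Hn_bounds[of s x] Hn_ring[of x y] Hn_ring[of s x] eq f2 f2c f3 f4 by auto
  then show ?thesis unfolding Mes_def using eq R_le[of "Hn x y" s x] h1 by simp
qed




lemma mlb: "(0::real) \<le> k \<Longrightarrow> - v \<le> u \<Longrightarrow> - (k*v) \<le> k*u"
  using mult_left_mono[of "-v" u k] by simp

lemma mla: "(0::real) \<le> k \<Longrightarrow> u \<le> v \<Longrightarrow> k*u \<le> k*v"
  using mult_left_mono[of u v k] by simp

lemma real_part:
  fixes a b c p :: real and x y s :: int
  assumes a: "a > 0" and b: "b > 0" and c: "c > 0" and abc: "a + b + c = 1"
    and bp: "b < p" and pbc: "p \<le> b + c" and p2: "p \<le> 1/2"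
    and lo: "p - 1 \<le> s - (a+b)*x + a*y" and hi: "s - (a+b)*x + a*y < p"
    and h1: "Hn x y \<ge> 1"
  shows "Hn s x \<le> Hn x y"
    and "y = Hn x y \<longrightarrow> s < Hn x y"
    and "x - y = - Hn x y \<and> x \<le> 0 \<longrightarrow> s < Hn x y"
    and "y = - Hn x y \<longrightarrow> s > - Hn x y"
    and "x - y = Hn x y \<and> 0 \<le> x \<and> x < Hn x y \<longrightarrow> s < Hn x y \<and> s > x - Hn x y"
proof -
  define h where "h = Hn x y"
  have hb: "- h \<le> x" "x \<le> h" "- h \<le> y" "y \<le> h" "- h \<le> x - y" "x - y \<le> h"
    using Hn_bounds[of x y] unfolding h_def by auto
  have rb: "- real_of_int h \<le> x" "real_of_int x \<le> h" "- real_of_int h \<le> y" "real_of_int y \<le> h"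
     "- real_of_int h \<le> x - y" "real_of_int x - y \<le> h" "real_of_int h \<ge> 1"
    using hb h1 unfolding h_def by linarith+
  have pr: "a * x \<le> a * h" "- (a * h) \<le> a * x" "a * y \<le> a * h" "- (a * h) \<le> a * y"
    "b * x \<le> b * h" "- (b * h) \<le> b * x" "c * x \<le> c * h" "- (c * h) \<le> c * x"
    "a * (x - y) \<le> a * h" "- (a * h) \<le> a * (x - y)"
    "a * h \<ge> a" "b * h \<ge> b" "c * h \<ge> c"
    using rb a b c
    by (auto intro!: mla mlb simp del: of_int_diff)
  have pr2: "a * (real_of_int x - y) = a * x - a * y" by (simp add: algebra_simps)
  have pr3: "a * x - a * y \<le> a * h" "- (a * h) \<le> a * x - a * y" using pr pr2 by auto
  have pr4: "(a+b) * real_of_int x = a * x + b * x" by (simp add: algebra_simps)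
  have eqx: "a * x + b * x + c * x = real_of_int x" using abc by (metis distrib_right mult_1)
  have eqh: "a * h + b * h + c * h = h" using abc by (metis distrib_right mult_1)
  have "real_of_int s < real_of_int h + 1" using hi pr pr3 pr4 eqh eqx bp p2 a b c by linarith
  moreover have "real_of_int s > - real_of_int h - 1" using lo pr pr3 pr4 eqh eqx bp p2 a b c by linarith
  moreover have "real_of_int s - x < real_of_int h + 1" using hi pr pr3 pr4 eqh eqx bp p2 a b c abc by linarith
  moreover have "real_of_int s - x > - real_of_int h - 1" using lo pr pr3 pr4 eqh eqx bp p2 a b c abc by linarith
  ultimately have "s \<le> h" "s \<ge> - h" "s - x \<le> h" "s - x \<ge> - h" by linarith+
  then have "Hn s x \<le> h" using hb unfolding Hn_def by auto
  then show "Hn s x \<le> Hn x y" unfolding h_def .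
  show "y = Hn x y \<longrightarrow> s < Hn x y"
  proof
    assume "y = Hn x y"
    then have "real_of_int y = h" unfolding h_def by simp
    then have "a * real_of_int y = a * h" by simp
    then have "real_of_int s < h" using hi pr pr3 pr4 eqh eqx bp p2 a b c abc by linarith
    then show "s < Hn x y" unfolding h_def by linarith
  qed
  show "x - y = - Hn x y \<and> x \<le> 0 \<longrightarrow> s < Hn x y"
  proof
    assume as: "x - y = - Hn x y \<and> x \<le> 0"
    then have "real_of_int x - y = - real_of_int h" "real_of_int x \<le> 0" unfolding h_def by linarith+
    moreover have "a * x - a * y = - (a * h)" using pr2 \<open>real_of_int x - y = - real_of_int h\<close> by (metis mult_minus_right)
    moreover have "b * x \<le> 0" using \<open>real_of_int x \<le> 0\<close> b by (simp add: mult_nonneg_nonpos)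
    ultimately have "real_of_int s < 1" using hi pr pr3 pr4 eqh eqx bp p2 a b c abc a by linarith
    then show "s < Hn x y" using h1 by linarith
  qed
  show "y = - Hn x y \<longrightarrow> s > - Hn x y"
  proof
    assume "y = - Hn x y"
    then have "real_of_int y = - real_of_int h" unfolding h_def by simp
    then have "a * real_of_int y = - (a * h)" by simp
    then have "real_of_int s > - real_of_int h" using lo pr pr3 pr4 eqh eqx bp p2 a b c abc by linarith
    then show "s > - Hn x y" unfolding h_def by linarith
  qed
  show "x - y = Hn x y \<and> 0 \<le> x \<and> x < Hn x y \<longrightarrow> s < Hn x y \<and> s > x - Hn x y"
  proof
    assume as: "x - y = Hn x y \<and> 0 \<le> x \<and> x < Hn x y"
    then have e: "real_of_int y = x - h" "real_of_int x \<ge> 0" "real_of_int x \<le> h - 1" unfolding h_def by linarith+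
    have "b * (x + 1) \<le> b * h" using e b by (intro mla) auto
    then have bx1: "b * x \<le> b * h - b" by (simp add: algebra_simps)
    have bx: "b * x \<le> b * h - b" "b * x \<ge> 0" using bx1 e b by auto
    have ay: "a * y = a * x - a * h" using e(1) by (simp add: right_diff_distrib)
    have "real_of_int s < h" using hi bx ay pr pr4 eqh bp pbc by linarith
    moreover have "real_of_int s > real_of_int x - real_of_int h" using lo bx ay pr pr4 eqh a b bp e by linarith
    ultimately show "s < Hn x y \<and> s > x - Hn x y" unfolding h_def by linarith
  qed
qed




lemma consts_facts:
  fixes \<beta> :: real and m :: nat
  assumes b1: "\<beta> > 1" and m1: "m \<ge> 1" and hb: "\<beta>^3 = real m * \<beta>^2 + real m * \<beta> + real m"
  shows "m/\<beta> > 0" "m/\<beta>^2 > 0" "m/\<beta>^3 > 0" "m/\<beta> + m/\<beta>^2 + m/\<beta>^3 = 1"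
    "m/\<beta>^2 < 1/(\<beta>+1)" "1/(\<beta>+1) \<le> m/\<beta>^2 + m/\<beta>^3" "1/(\<beta>+1) \<le> 1/2"
    "\<beta> - m = m/\<beta> + m/\<beta>^2" "\<beta> * (\<beta> - m) = m + m/\<beta>"
proof -
  have mp: "real m > 0" using m1 by simp
  show "m/\<beta> > 0" "m/\<beta>^2 > 0" "m/\<beta>^3 > 0" using mp b1 by auto
  have "m/\<beta> + m/\<beta>^2 + m/\<beta>^3 = (m*\<beta>^2 + m*\<beta> + m)/\<beta>^3"
    using b1 by (simp add: field_simps power2_eq_square power3_eq_cube)
  also have "\<dots> = 1" using b1 by (simp only: hb[symmetric]) simp
  finally show "m/\<beta> + m/\<beta>^2 + m/\<beta>^3 = 1" .
  have k: "\<beta> * (\<beta>^2 - m*\<beta> - m) = m" using hb by (simp add: algebra_simps power2_eq_square power3_eq_cube)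
  then have "0 < \<beta> * (\<beta>^2 - m*\<beta> - m)" using mp by simp
  then have "\<beta>^2 - m*\<beta> - m > 0" using b1 by (simp add: zero_less_mult_iff)
  then have a: "m * (\<beta>+1) < \<beta>^2" by (simp add: algebra_simps)
  have "m/\<beta>^2 = m*(\<beta>+1)/(\<beta>^2*(\<beta>+1))" using b1 by simp
  also have "\<dots> < \<beta>^2/(\<beta>^2*(\<beta>+1))" using a b1 by (intro divide_strict_right_mono) auto
  also have "\<dots> = 1/(\<beta>+1)" using b1 by simp
  finally show "m/\<beta>^2 < 1/(\<beta>+1)" .
  have t1: "\<beta>^3 \<le> m * (\<beta>+1)^2" using hb mp b1 by (simp add: power2_eq_square algebra_simps)
  have t2: "m/\<beta>^2 + m/\<beta>^3 = m * (\<beta>+1) / \<beta>^3" using b1 by (simp add: field_simps power2_eq_square power3_eq_cube)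
  have "1/(\<beta>+1) = \<beta>^3 / (\<beta>^3 * (\<beta>+1))" using b1 by simp
  also have "\<dots> \<le> (m * (\<beta>+1)^2) / (\<beta>^3 * (\<beta>+1))" using t1 b1 by (intro divide_right_mono) auto
  also have "\<dots> = m*(\<beta>+1)/\<beta>^3" using b1 by (simp add: power2_eq_square)
  finally show "1/(\<beta>+1) \<le> m/\<beta>^2 + m/\<beta>^3" using t2 by simp
  show "1/(\<beta>+1) \<le> 1/2" using b1 by (simp add: field_simps)
  have "m/\<beta> + m/\<beta>^2 = (m*\<beta> + m)/\<beta>^2" using b1 by (simp add: field_simps power2_eq_square)
  also have "m*\<beta> + m = \<beta>^3 - m * \<beta>^2" using hb by simp
  also have "(\<beta>^3 - m * \<beta>^2)/\<beta>^2 = \<beta> - m" using b1 by (simp add: field_simps power2_eq_square power3_eq_cube)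
  finally show t5: "\<beta> - m = m/\<beta> + m/\<beta>^2" by simp
  show "\<beta> * (\<beta> - m) = m + m/\<beta>"
    using t5 b1 by (simp add: field_simps power2_eq_square)
qed

lemma core_srs:
  fixes \<beta> :: real and m :: nat
  assumes b1: "\<beta> > 1" and m1: "m \<ge> 1" and hb: "\<beta>^3 = real m * \<beta>^2 + real m * \<beta> + real m"
  shows "\<forall>q u. u = of_int s - (\<beta> - m) * of_int r + (m/\<beta>) * of_int q \<longrightarrow> (\<exists>N. (nb_T \<beta> ^^ N) u = 0)"
proof (induction "Mes s r" arbitrary: s r rule: less_induct)
  case less
  note cf = consts_facts[OF b1 m1 hb]
  define a where "a = m/\<beta>"
  define b where "b = m/\<beta>^2"
  define c where "c = m/\<beta>^3"
  define p where "p = 1/(\<beta>+1)"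
  have th1: "\<beta> - m = a + b" unfolding a_def b_def using cf by simp
  have ell: "nb_ell \<beta> = p - 1" unfolding p_def using ell_eq[OF b1] .
  show ?case
  proof (intro allI impI)
    fix q u assume u: "u = of_int s - (\<beta> - m) * of_int r + (m/\<beta>) * of_int q"
    define n where "n = - int m * (s - r + q) - \<lfloor>- \<beta> * u - nb_ell \<beta>\<rfloor>"
    have bu: "- \<beta> * u = of_int (- int m * (s - r + q)) - (\<beta> - m) * of_int s + (m/\<beta>) * of_int r"
    proof -
      have "- \<beta> * u = - \<beta> * s + (\<beta> * (\<beta> - m)) * r - (\<beta> * (m/\<beta>)) * q"
        unfolding u by (simp add: algebra_simps)
      also have "\<dots> = - \<beta> * s + (m + m/\<beta>) * r - m * q" using cf(9) b1 by simp
      finally show ?thesis by (simp add: algebra_simps)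
    qed
    have Tu: "nb_T \<beta> u = of_int n - (\<beta> - m) * of_int s + (m/\<beta>) * of_int r"
      unfolding nb_T_def n_def using bu by simp
    have bnd: "p - 1 \<le> n - (a+b) * s + a * r" "n - (a+b) * s + a * r < p"
      using T_bounds[OF b1, of u] unfolding Tu ell th1 a_def by auto
    show "\<exists>N. (nb_T \<beta> ^^ N) u = 0"
    proof (cases "s = 0 \<and> r = 0")
      case True
      have "p > 0" "p \<le> 1/2" unfolding p_def using b1 cf(7) by auto
      then have "n = 0" using bnd True by (simp; linarith)
      then have "nb_T \<beta> u = 0" using Tu True by simp
      then show ?thesis by (intro exI[of _ 1]) simp
    next
      case False
      then have h1: "Hn s r \<ge> 1" unfolding Hn_def by auto
      note rp = real_part[of a b c p n s r]
      have "a > 0" "b > 0" "c > 0" "a + b + c = 1" "b < p" "p \<le> b + c" "p \<le> 1/2"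
        using cf unfolding a_def b_def c_def p_def by auto
      note rp' = rp[OF this bnd h1]
      have "Mes n s < Mes s r" by (rule int_part[OF h1 rp'])
      then have "\<exists>N. (nb_T \<beta> ^^ N) (nb_T \<beta> u) = 0" using less Tu by blast
      then obtain N where "(nb_T \<beta> ^^ N) (nb_T \<beta> u) = 0" by blast
      then have "(nb_T \<beta> ^^ Suc N) u = 0" by (simp only: funpow_Suc_right o_apply)
      then show ?thesis by blast
    qed
  qed
qed

lemma core_Zb:
  fixes \<beta> :: real and m :: nat
  assumes b1: "\<beta> > 1" and m1: "m \<ge> 1" and hb: "\<beta>^3 = real m * \<beta>^2 + real m * \<beta> + real m"
    and u: "u \<in> Zb \<beta>"
  shows "\<exists>N. (nb_T \<beta> ^^ N) u = 0"
proof -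
  obtain A B C :: int where ue: "u = of_int A + of_int B * \<beta> + of_int C * \<beta>^2" using u unfolding Zb_def by blast
  note cf = consts_facts[OF b1 m1 hb]
  have sq: "\<beta>^2 = m * \<beta> + m + m/\<beta>" using cf(9) by (simp add: algebra_simps power2_eq_square)
  have "u = of_int (A + B * int m + C * int m + C * int m * int m) - (\<beta> - m) * of_int (- (B + C * int m)) + (m/\<beta>) * of_int C"
    unfolding ue sq by (simp add: algebra_simps)
  then show ?thesis using core_srs[OF b1 m1 hb] by blast
qed




lemma Fin_iff: "x \<in> Fin_nb \<beta> \<longleftrightarrow> (\<exists>i z. z \<in> Z_nb \<beta> \<and> x = inverse ((- \<beta>)^i) * z)"
  unfolding Fin_nb_def by blast

lemma Z_nb_of_orbit:
  assumes b1: "\<beta> > 1" and y': "z / (- \<beta>) ^ nb_k \<beta> z = y'"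
    and orb: "(nb_T \<beta> ^^ nb_k \<beta> z) y' = 0"
  shows "z \<in> Z_nb \<beta>"
  unfolding Z_nb_def
proof (intro CollectI allI impI)
  fix i assume i: "nb_k \<beta> z < i"
  have e: "i - 1 = (i - 1 - nb_k \<beta> z) + nb_k \<beta> z" using i by simp
  have "nb_T \<beta> ^^ (i - 1) = nb_T \<beta> ^^ (i - 1 - nb_k \<beta> z) \<circ> nb_T \<beta> ^^ nb_k \<beta> z"
    by (metis e funpow_add)
  then have "(nb_T \<beta> ^^ (i - 1)) y' = (nb_T \<beta> ^^ (i - 1 - nb_k \<beta> z)) ((nb_T \<beta> ^^ nb_k \<beta> z) y')"
    by simp
  also have "\<dots> = 0" using orb T_funpow_zero[OF b1] by simp
  finally show "nb_digit \<beta> (z / (- \<beta>) ^ nb_k \<beta> z) i = 0"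
    unfolding nb_digit_def y' using floor_mell[OF b1] by simp
qed

lemma Zb_Fin:
  fixes \<beta> :: real and m :: nat
  assumes b1: "\<beta> > 1" and m1: "m \<ge> 1" and hb: "\<beta>^3 = real m * \<beta>^2 + real m * \<beta> + real m"
    and w: "w \<in> Zb \<beta>"
  shows "w \<in> Fin_nb \<beta>"
proof -
  define k where "k = nb_k \<beta> w"
  define y where "y = w / (- \<beta>) ^ k"
  have yin: "y \<in> {nb_ell \<beta> <..< nb_ell \<beta> + 1}" using nb_k_in[OF b1] unfolding y_def k_def .
  define v where "v = (nb_T \<beta> ^^ k) y"
  have "(- \<beta>)^k * y = w" unfolding y_def using b1 by simp
  then have "w - v \<in> Zb \<beta>" using T_Zb_diff[OF hb, of k y] unfolding v_def by simp
  then have "v \<in> Zb \<beta>" using Zb_diff[OF w] by fastforce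
  then obtain N where N: "(nb_T \<beta> ^^ N) v = 0" using core_Zb[OF b1 m1 hb] by blast
  define z where "z = w * (- \<beta>)^N"
  define k' where "k' = nb_k \<beta> z"
  have zk: "z / (- \<beta>) ^ (k + N) = y" unfolding z_def y_def using b1 by (simp add: power_add)
  have "k' \<le> k + N" unfolding k'_def by (rule nb_k_le) (use zk yin in simp)
  define y' where "y' = z / (- \<beta>) ^ k'"
  have y'in: "y' \<in> {nb_ell \<beta> <..< nb_ell \<beta> + 1}" using nb_k_in[OF b1] unfolding y'_def k'_def .
  have "y = y' / (- \<beta>) ^ (k + N - k')"
    unfolding zk[symmetric] y'_def using b1 \<open>k' \<le> k + N\<close>
    by (simp add: power_add[symmetric])
  then have "(nb_T \<beta> ^^ (k + N - k')) y = y'" using T_iter_div[OF b1] y'in by simp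
  then have "(nb_T \<beta> ^^ k') y' = (nb_T \<beta> ^^ (k' + (k + N - k'))) y"
    by (simp add: funpow_add)
  also have "\<dots> = (nb_T \<beta> ^^ (N + k)) y" using \<open>k' \<le> k + N\<close> by (simp add: add.commute)
  also have "\<dots> = 0" using N unfolding v_def by (simp add: funpow_add)
  finally have "z \<in> Z_nb \<beta>" using Z_nb_of_orbit[OF b1] unfolding y'_def k'_def by blast
  moreover have "w = inverse ((- \<beta>)^N) * z" unfolding z_def using b1 by simp
  ultimately show ?thesis unfolding Fin_iff by blast
qed

lemma Zb_scaled_Fin:
  fixes \<beta> :: real and m :: nat
  assumes b1: "\<beta> > 1" and m1: "m \<ge> 1" and hb: "\<beta>^3 = real m * \<beta>^2 + real m * \<beta> + real m"
    and w: "w \<in> Zb \<beta>"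
  shows "inverse ((- \<beta>)^i) * w \<in> Fin_nb \<beta>"
proof -
  obtain l z where z: "z \<in> Z_nb \<beta>" "w = inverse ((- \<beta>)^l) * z" using Zb_Fin[OF assms] unfolding Fin_iff by blast
  have "inverse ((- \<beta>)^i) * w = inverse ((- \<beta>)^(i+l)) * z" using z(2) by (simp add: power_add)
  then show ?thesis using z(1) unfolding Fin_iff by blast
qed

lemma ring_eq:
  fixes \<beta> :: real and m :: nat
  assumes b1: "\<beta> > 1" and m1: "m \<ge> 1" and hb: "\<beta>^3 = real m * \<beta>^2 + real m * \<beta> + real m"
  shows "is_ring_set (Fin_nb \<beta>)"
  unfolding is_ring_set_def
proof (intro conjI ballI)
  fix x y assume x: "x \<in> Fin_nb \<beta>" and y: "y \<in> Fin_nb \<beta>"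
  obtain i z1 where z1: "z1 \<in> Z_nb \<beta>" "x = inverse ((- \<beta>)^i) * z1" using x unfolding Fin_iff by blast
  obtain j z2 where z2: "z2 \<in> Z_nb \<beta>" "y = inverse ((- \<beta>)^j) * z2" using y unfolding Fin_iff by blast
  have Z1: "z1 \<in> Zb \<beta>" using Z_nb_sub[OF b1 hb z1(1)] .
  have Z2: "z2 \<in> Zb \<beta>" using Z_nb_sub[OF b1 hb z2(1)] .
  have P: "(- \<beta>)^i \<in> Zb \<beta>" "(- \<beta>)^j \<in> Zb \<beta>" using Zb_negbeta_pow[OF hb] by auto
  have ne: "(- \<beta>)^i \<noteq> 0" "(- \<beta>)^j \<noteq> 0" using b1 by auto
  have e1: "z1 = x * (- \<beta>)^i" using z1(2) ne by simp
  have e2: "z2 = y * (- \<beta>)^j" using z2(2) ne by simp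
  have "z1 * (- \<beta>)^j + z2 * (- \<beta>)^i = (x + y) * ((- \<beta>)^i * (- \<beta>)^j)" unfolding e1 e2 by (simp add: algebra_simps)
  moreover have P0: "(- \<beta>)^i * (- \<beta>)^j \<noteq> 0" using ne by simp
  moreover have "inverse ((- \<beta>)^(i+j)) * ((x + y) * ((- \<beta>)^i * (- \<beta>)^j)) = x + y"
    unfolding power_add using P0 by (metis mult.commute mult.left_commute mult_1 right_inverse)
  ultimately have "x + y = inverse ((- \<beta>)^(i+j)) * (z1 * (- \<beta>)^j + z2 * (- \<beta>)^i)" by simp
  moreover have "z1 * (- \<beta>)^j + z2 * (- \<beta>)^i \<in> Zb \<beta>"
    using Zb_add Zb_mult[OF hb] Z1 Z2 P by blast
  ultimately show "x + y \<in> Fin_nb \<beta>" using Zb_scaled_Fin[OF b1 m1 hb] by simp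
  have "x * y = inverse ((- \<beta>)^(i+j)) * (z1 * z2)"
    using z1(2) z2(2) by (simp add: power_add algebra_simps)
  moreover have "z1 * z2 \<in> Zb \<beta>" using Zb_mult[OF hb Z1 Z2] .
  ultimately show "x * y \<in> Fin_nb \<beta>" using Zb_scaled_Fin[OF b1 m1 hb] by simp
next
  fix x assume x: "x \<in> Fin_nb \<beta>"
  obtain i z1 where z1: "z1 \<in> Z_nb \<beta>" "x = inverse ((- \<beta>)^i) * z1" using x unfolding Fin_iff by blast
  have "- z1 \<in> Zb \<beta>" using Zb_uminus Z_nb_sub[OF b1 hb z1(1)] by blast
  moreover have "- x = inverse ((- \<beta>)^i) * (- z1)" using z1(2) by simp
  ultimately show "- x \<in> Fin_nb \<beta>" using Zb_scaled_Fin[OF b1 m1 hb] by metis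
qed




lemma beta_bounds:
  fixes m n :: nat and \<beta> :: real
  assumes n1: "1 \<le> n" and nm: "n \<le> m" and b1: "\<beta> > 1"
    and hb: "\<beta> ^ 3 - real m * \<beta> ^ 2 - real m * \<beta> - real n = 0"
  shows "\<beta> > m" "\<beta> < m + 1"
proof -
  have e: "\<beta>^2 * (\<beta> - m) = m * \<beta> + n" using hb by (simp add: algebra_simps power2_eq_square power3_eq_cube)
  have "m * \<beta> + n > 0" using n1 b1 by (simp add: add_nonneg_pos)
  then have "\<beta>^2 * (\<beta> - m) > 0" using e by simp
  then show bm: "\<beta> > m" using b1 by (simp add: zero_less_mult_iff)
  show "\<beta> < m + 1"
  proof (rule ccontr)
    assume "\<not> \<beta> < m + 1"
    then have ge: "\<beta> \<ge> m + 1" by simp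
    have "\<beta>^2 * (\<beta> - m) \<ge> \<beta>^2 * 1" using ge b1 by (intro mult_left_mono) auto
    moreover have "\<beta>^2 \<ge> (m+1) * \<beta>" using ge b1 by (simp add: power2_eq_square mult_right_mono)
    moreover have "(m+1) * \<beta> > m * \<beta> + n"
    proof -
      have "real n < \<beta>" using nm ge by linarith
      then show ?thesis by (simp add: algebra_simps)
    qed
    ultimately show False using e by linarith
  qed
qed

lemma one_in_Z:
  assumes b1: "\<beta> > 2"
  shows "1 \<in> Z_nb \<beta>"
proof -
  have b1': "\<beta> > 1" using b1 by simp
  have e: "nb_ell \<beta> = - \<beta> / (\<beta> + 1)" unfolding nb_ell_def by simp
  have P1: "1 / (- \<beta>)^1 \<in> {nb_ell \<beta> <..< nb_ell \<beta> + 1}"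
  proof -
    have "2 * \<beta> < \<beta> * \<beta>" using b1 by (intro mult_strict_right_mono) auto
    then have "\<beta> + 1 < \<beta> * \<beta>" using b1 by linarith
    then have "- \<beta> / (\<beta>+1) < - 1 / \<beta>" using b1 by (simp add: field_simps)
    moreover have "- 1 / \<beta> < - \<beta> / (\<beta> + 1) + 1" using b1 by (simp add: field_simps)
    ultimately show ?thesis using e by simp
  qed
  have P0: "1 / (- \<beta>)^0 \<notin> {nb_ell \<beta> <..< nb_ell \<beta> + 1}"
    using ell_range[OF b1'] by simp
  have k: "nb_k \<beta> 1 = 1" unfolding nb_k_def
  proof (rule Least_equality)
    show "1 / (- \<beta>)^1 \<in> {nb_ell \<beta> <..< nb_ell \<beta> + 1}" by (rule P1)
    fix y assume "1 / (- \<beta>)^y \<in> {nb_ell \<beta> <..< nb_ell \<beta> + 1}"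
    then show "1 \<le> y" using P0 by (cases y) auto
  qed
  have "\<lfloor>- \<beta> * (1 / - \<beta>) - nb_ell \<beta>\<rfloor> = 1" using b1 ell_range[OF b1'] by (simp add: floor_eq_iff)
  then have "nb_T \<beta> (1 / (- \<beta>)) = 0" unfolding nb_T_def using b1 by simp
  then show ?thesis by (intro Z_nb_of_orbit[OF b1' refl]) (simp add: k)
qed

lemma minus_one_notin:
  fixes m n :: nat and \<beta> :: real
  assumes n1: "1 \<le> n" and nm: "n < m" and b1: "\<beta> > 1"
    and hb: "\<beta> ^ 3 - real m * \<beta> ^ 2 - real m * \<beta> - real n = 0"
  shows "- 1 \<notin> Fin_nb \<beta>"
proof
  assume "- 1 \<in> Fin_nb \<beta>"
  then obtain i z where z: "z \<in> Z_nb \<beta>" "- 1 = inverse ((- \<beta>)^i) * z" unfolding Fin_iff by blast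
  have bm: "\<beta> > m" "\<beta> < m + 1" using beta_bounds[OF n1 _ b1 hb] nm by auto
  have ne: "(- \<beta>)^i \<noteq> 0" using b1 by simp
  have ze: "z = - ((- \<beta>)^i)" using z(2) ne by (simp add: field_simps)
  have ell: "nb_ell \<beta> = - \<beta> / (\<beta> + 1)" unfolding nb_ell_def by simp
  have er: "-1 < nb_ell \<beta>" "nb_ell \<beta> + 1 = 1/(\<beta>+1)" "1/(\<beta>+1) < 1/2"
    using ell_range[OF b1] ell_eq[OF b1] b1 by (auto simp: divide_less_eq)
  have "real m \<ge> 2" using n1 nm by simp
  then have b2: "\<beta> > 2" using bm by linarith
  define y where "y = - 1 / \<beta>^2"
  have zy: "z / (- \<beta>)^(i+2) = y" unfolding ze y_def using b1 by (simp add: power_add power2_eq_square)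
  have yin: "y \<in> {nb_ell \<beta> <..< nb_ell \<beta> + 1}"
  proof -
    have "2 * \<beta> < \<beta> * \<beta>" using b2 by (intro mult_strict_right_mono) auto
    moreover have "\<beta> * \<beta> * 1 < \<beta> * \<beta> * \<beta>" using b2 by (intro mult_strict_left_mono) auto
    ultimately have "\<beta> + 1 < \<beta> * \<beta> * \<beta>" using b2 by linarith
    then have "- \<beta> / (\<beta>+1) < - 1 / \<beta>^2" using b1 by (simp add: field_simps power2_eq_square)
    moreover have "- 1 / \<beta>^2 < 1/(\<beta>+1)"
    proof -
      have "- 1 / \<beta>^2 < 0" using b1 by simp
      moreover have "0 < 1/(\<beta>+1)" using b1 by simp
      ultimately show ?thesis by linarith
    qed
    ultimately show ?thesis unfolding y_def using ell er by simp
  qed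
  have k: "nb_k \<beta> z = i + 2" unfolding nb_k_def
  proof (rule Least_equality)
    show "z / (- \<beta>)^(i+2) \<in> {nb_ell \<beta> <..< nb_ell \<beta> + 1}" using zy yin by simp
    fix k assume kin: "z / (- \<beta>)^k \<in> {nb_ell \<beta> <..< nb_ell \<beta> + 1}"
    show "i + 2 \<le> k"
    proof (rule ccontr)
      assume "\<not> i + 2 \<le> k"
      then consider "k \<le> i" | "k = i + 1" by linarith
      then show False
      proof cases
        case 1
        have "(- \<beta>)^i = (- \<beta>)^(i - k) * (- \<beta>)^k" using 1 by (simp add: power_add[symmetric])
        then have "z / (- \<beta>)^k = - ((- \<beta>)^(i - k))" unfolding ze using b1 by simp
        moreover have "\<bar>(- \<beta>)^(i - k)\<bar> \<ge> 1" using b1 by (simp add: power_abs)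
        then have "1 \<le> (- \<beta>)^(i - k) \<or> (- \<beta>)^(i - k) \<le> -1"
          by (metis abs_ge_self abs_if abs_minus_cancel abs_of_nonneg le_minus_iff linorder_le_cases minus_minus)
        moreover have "nb_ell \<beta> < z / (- \<beta>)^k" "z / (- \<beta>)^k < nb_ell \<beta> + 1" using kin by auto
        ultimately show False using er by linarith
      next
        case 2
        have "z / (- \<beta>)^k = 1 / \<beta>" unfolding ze 2 using b1 by simp
        moreover have "1/(\<beta>+1) \<le> 1 / \<beta>" using b1 by (simp add: field_simps)
        ultimately show False using kin er by simp
      qed
    qed
  qed
  define p0 where "p0 = - (real n + 1) / (\<beta> + 1)"
  have p0e: "p0 * (\<beta> + 1) = - (real n + 1)" unfolding p0_def using b1 by simp
  have p0in: "0 \<le> p0 + \<beta> / (\<beta>+1)" "p0 + \<beta> / (\<beta>+1) < 1"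
  proof -
    have "(p0 + \<beta> / (\<beta>+1)) * (\<beta>+1) = \<beta> - n - 1" using p0e b1 by (simp add: distrib_right)
    then have "p0 + \<beta> / (\<beta>+1) = (\<beta> - n - 1) / (\<beta> + 1)" using b1 by (simp add: eq_divide_eq)
    moreover have "real n + 1 \<le> \<beta>" using bm nm by linarith
    ultimately show "0 \<le> p0 + \<beta> / (\<beta>+1)" "p0 + \<beta> / (\<beta>+1) < 1" using b1 by (auto simp: field_simps)
  qed
  have T1: "nb_T \<beta> y = 1 / \<beta> - 1"
  proof -
    have a: "- \<beta> * y = 1 / \<beta>" unfolding y_def using b1 by (simp add: power2_eq_square)
    have "1/\<beta> < 1" using b1 by simp
    moreover have "1 / (\<beta>+1) \<le> 1 / \<beta>" using b1 by (simp add: field_simps)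
    ultimately have "1 \<le> 1 / \<beta> - nb_ell \<beta>" "1 / \<beta> - nb_ell \<beta> < 1 + 1" using er by linarith+
    then have "\<lfloor>1 / \<beta> - nb_ell \<beta>\<rfloor> = 1" by (simp add: floor_eq_iff)
    then show ?thesis unfolding nb_T_def a by simp
  qed
  have T2: "nb_T \<beta> (1 / \<beta> - 1) = \<beta> - 1 - m"
  proof -
    have a: "- \<beta> * (1 / \<beta> - 1) = \<beta> - 1" using b1 by (simp add: algebra_simps)
    have e: "\<beta>^2 - m * \<beta> = m + n / \<beta>" using hb b1 by (simp add: field_simps power2_eq_square power3_eq_cube)
    have "(\<beta> - 1 - m) * (\<beta> + 1) + \<beta> = \<beta>^2 - m * \<beta> - m - 1 + \<beta>" by (simp add: algebra_simps power2_eq_square)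
    also have "\<dots> = n / \<beta> - 1 + \<beta>" using e by simp
    finally have "(\<beta> - 1 - m) * (\<beta> + 1) + \<beta> \<ge> 0" using b1 divide_nonneg_pos[of "real n" \<beta>] by linarith
    then have l: "real m \<le> \<beta> - 1 + \<beta> / (\<beta> + 1)" using b1 by (simp add: field_simps)
    have u: "\<beta> / (\<beta> + 1) < 1" using b1 by simp
    have ell': "nb_ell \<beta> = - (\<beta> / (\<beta> + 1))" unfolding nb_ell_def by simp
    have "real m \<le> \<beta> - 1 - nb_ell \<beta>" "\<beta> - 1 - nb_ell \<beta> < real m + 1" using l u bm ell' by linarith+
    then have "\<lfloor>\<beta> - 1 - nb_ell \<beta>\<rfloor> = int m" by (simp add: floor_eq_iff)
    then show ?thesis unfolding nb_T_def a by simp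
  qed
  have T3: "nb_T \<beta> (\<beta> - 1 - m) = p0"
  proof -
    have a: "- \<beta> * (\<beta> - 1 - m) = p0 + 1"
    proof -
      have "(- \<beta> * (\<beta> - 1 - m) - 1) * (\<beta> + 1) = - (\<beta>^3) + real m * \<beta>^2 + real m * \<beta> - 1"
        by (simp add: algebra_simps power2_eq_square power3_eq_cube)
      also have "\<dots> = - (real n + 1)" using hb by simp
      finally have "(- \<beta> * (\<beta> - 1 - m) - 1) * (\<beta> + 1) = p0 * (\<beta> + 1)" using p0e by simp
      then show ?thesis using b1 by simp
    qed
    have "\<lfloor>p0 + 1 - nb_ell \<beta>\<rfloor> = 1" using p0in ell by (simp add: floor_eq_iff)
    then show ?thesis unfolding nb_T_def a by simp
  qed
  have Tp: "nb_T \<beta> p0 = p0" and dp: "\<lfloor>- \<beta> * p0 - nb_ell \<beta>\<rfloor> = int n + 1"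
  proof -
    have a: "- \<beta> * p0 = p0 + (real n + 1)" using p0e by (simp add: algebra_simps)
    show "\<lfloor>- \<beta> * p0 - nb_ell \<beta>\<rfloor> = int n + 1" unfolding a using p0in ell by (simp add: floor_eq_iff)
    then show "nb_T \<beta> p0 = p0" unfolding nb_T_def a by simp
  qed
  have Tpj: "(nb_T \<beta> ^^ j) p0 = p0" for j by (induction j) (auto simp: Tp)
  have "nb_T \<beta> (nb_T \<beta> (nb_T \<beta> y)) = p0" unfolding T1 T2 T3 ..
  then have "(nb_T \<beta> ^^ 3) y = p0" by (simp add: numeral_3_eq_3)
  then have "(nb_T \<beta> ^^ (i + 3)) y = p0" using Tpj by (simp add: funpow_add)
  then have "(nb_T \<beta> ^^ (3 + i)) y = p0" by (simp add: add.commute)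
  then have "nb_digit \<beta> y (i + 4) = int n + 1" unfolding nb_digit_def using dp by simp
  moreover have "nb_digit \<beta> y (i + 4) = 0" using z(1) k zy unfolding Z_nb_def by auto
  ultimately show False by simp
qed



theorem theorem3:
  fixes m n :: nat and \<beta> :: real
  assumes "1 \<le> n" and "n \<le> m"
    and "\<beta> > 1"
    and "\<beta> ^ 3 - real m * \<beta> ^ 2 - real m * \<beta> - real n = 0"
  shows "is_ring_set (Fin_nb \<beta>) \<longleftrightarrow> n = m"
proof
  assume ring: "is_ring_set (Fin_nb \<beta>)"
  show "n = m"
  proof (rule ccontr)
    assume "n \<noteq> m"
    then have nm: "n < m" using assms(2) by simp
    have bm: "\<beta> > m" using beta_bounds[OF assms(1,2,3,4)] by simp
    have "real m \<ge> 2" using assms(1) nm by simp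
    then have b2: "\<beta> > 2" using bm by linarith
    have "1 \<in> Z_nb \<beta>" using one_in_Z[OF b2] .
    then have "1 \<in> Fin_nb \<beta>" unfolding Fin_iff by (intro exI[of _ 0] exI[of _ 1]) simp
    then have "- 1 \<in> Fin_nb \<beta>" using ring unfolding is_ring_set_def by blast
    then show False using minus_one_notin[OF assms(1) nm assms(3,4)] by simp
  qed
next
  assume e: "n = m"
  have hb: "\<beta>^3 = real m * \<beta>^2 + real m * \<beta> + real m" using assms(4) e by simp
  show "is_ring_set (Fin_nb \<beta>)" using ring_eq[OF assms(3) _ hb] assms(1) e by simp
qed

end
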